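(* Let $p$ be an odd prime and let $c,d$ be positive integers with $36\log_2 p\leq d\leq 3\log_2 c$. Let $L\in\mathbb{F}_p^{d\times c}$ be a matrix whose columns are pairwise distinct vectors of $\mathbb{F}_p^d$, and let $v$ be uniformly distributed on $\{0,1\}^d\subseteq\mathbb{F}_p^d$. Then \[ \mathbb{P}\big[L^\top v\in\{0,1\}^c\big]\leq 3\cdot 2^{-d/(36p^2)} . \] *)

theory Defs
  imports "HOL-Probability.Probability"
begin

text \<open>F_p is represented by the residues {0..<p} of int; arithmetic is taken mod p.
  A d x c matrix L over F_p is a function L i j (row i < d, column j < c) with entries in {0..<p}.\<close>

definition binvecs :: "nat \<Rightarrow> (nat \<Rightarrow> int) set" where
  "binvecs d = ({0..<d} \<rightarrow>\<^sub>E {0, 1})"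

definition is_Fp_matrix :: "nat \<Rightarrow> nat \<Rightarrow> nat \<Rightarrow> (nat \<Rightarrow> nat \<Rightarrow> int) \<Rightarrow> bool" where
  "is_Fp_matrix p d c L \<longleftrightarrow> (\<forall>i<d. \<forall>j<c. L i j \<in> {0..<int p})"

definition distinct_columns :: "nat \<Rightarrow> nat \<Rightarrow> (nat \<Rightarrow> nat \<Rightarrow> int) \<Rightarrow> bool" where
  "distinct_columns d c L \<longleftrightarrow> (\<forall>j<c. \<forall>k<c. j \<noteq> k \<longrightarrow> (\<exists>i<d. L i j \<noteq> L i k))"

definition transp_mult_mod :: "nat \<Rightarrow> nat \<Rightarrow> (nat \<Rightarrow> nat \<Rightarrow> int) \<Rightarrow> (nat \<Rightarrow> int) \<Rightarrow> nat \<Rightarrow> int" where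
  "transp_mult_mod p d L v j = (\<Sum>i<d. L i j * v i) mod int p"

end

theory Submission
  imports Defs
begin

definition VV :: "nat \<Rightarrow> nat \<Rightarrow> (nat \<Rightarrow> int) set" where
  "VV p n = {0..<n} \<rightarrow>\<^sub>E {0..<int p}"

definition dot :: "nat \<Rightarrow> (nat \<Rightarrow> int) \<Rightarrow> (nat \<Rightarrow> int) \<Rightarrow> int" where
  "dot n u x = (\<Sum>i<n. u i * x i)"

definition UU :: "nat \<Rightarrow> nat \<Rightarrow> (nat \<Rightarrow> int) set \<Rightarrow> (nat \<Rightarrow> int) set" where
  "UU p n E = {u \<in> VV p n. \<exists>t. \<forall>x\<in>E. (dot n u x - t) mod int p \<in> {0,1}}"

definition CC :: "nat \<Rightarrow> nat \<Rightarrow> (nat \<Rightarrow> int) set \<Rightarrow> (nat \<Rightarrow> int) set" where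
  "CC p n F = {u \<in> VV p n. \<exists>s. \<forall>x\<in>F. (dot n u x - s) mod int p = 0}"

definition slice :: "nat \<Rightarrow> (nat \<Rightarrow> int) set \<Rightarrow> int \<Rightarrow> (nat \<Rightarrow> int) set" where
  "slice n F j = {x \<in> binvecs n. x(n := j) \<in> F}"

lemma finite_VV[simp]: "finite (VV p n)"
  unfolding VV_def by (intro finite_PiE) auto

lemma finite_binvecs[simp]: "finite (binvecs n)"
  unfolding binvecs_def by (intro finite_PiE) auto

lemma card_VV: "card (VV p n) = p ^ n"
  unfolding VV_def by (simp add: card_PiE)

lemma card_binvecs: "card (binvecs n) = 2 ^ n"
  unfolding binvecs_def by (simp add: card_PiE numeral_2_eq_2)

lemma dot_upd: "dot (Suc n) (w(n := a)) (x(n := j)) = dot n w x + a * j"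
  unfolding dot_def by (simp add: sum.lessThan_Suc)

lemma VV_Suc_decomp:
  assumes "u \<in> VV p (Suc n)"
  shows "u(n := undefined) \<in> VV p n" "u n \<in> {0..<int p}"
  using assms unfolding VV_def by (auto simp: PiE_iff extensional_def)

lemma VV_upd: "w \<in> VV p n \<Longrightarrow> a \<in> {0..<int p} \<Longrightarrow> w(n := a) \<in> VV p (Suc n)"
  unfolding VV_def by (auto simp: PiE_iff extensional_def)

lemma count_split:
  assumes "X \<subseteq> VV p (Suc n)"
  shows "card X \<le> (\<Sum>w\<in>VV p n. card {a\<in>{0..<int p}. w(n:=a) \<in> X})"
proof -
  let ?S = "Sigma (VV p n) (\<lambda>w. {a\<in>{0..<int p}. w(n:=a) \<in> X})"
  have "X \<subseteq> (\<lambda>(w,a). w(n:=a)) ` ?S"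
  proof
    fix u assume uX: "u \<in> X"
    then have u: "u \<in> VV p (Suc n)" using assms by auto
    have "u = (u(n:=undefined))(n := u n)" by simp
    then show "u \<in> (\<lambda>(w,a). w(n:=a)) ` ?S"
      using VV_Suc_decomp[OF u] uX
      by (intro image_eqI[where x="(u(n:=undefined), u n)"]) auto
  qed
  then have "card X \<le> card ((\<lambda>(w,a). w(n:=a)) ` ?S)"
    by (intro card_mono finite_imageI) (auto intro!: finite_SigmaI intro: finite_subset[of _ "{0..<int p}"])
  also have "\<dots> \<le> card ?S" by (rule card_image_le) (auto intro!: finite_SigmaI intro: finite_subset[of _ "{0..<int p}"])
  also have "card ?S = (\<Sum>w\<in>VV p n. card {a\<in>{0..<int p}. w(n:=a) \<in> X})"
    by (rule card_SigmaI) (auto intro: finite_subset[of _ "{0..<int p}"])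
  finally show ?thesis .
qed

lemma binvecs_upd: "x \<in> binvecs n \<Longrightarrow> j \<in> {0,1} \<Longrightarrow> x(n := j) \<in> binvecs (Suc n)"
  unfolding binvecs_def by (auto simp: PiE_iff extensional_def)

lemma binvecs_Suc_decomp:
  assumes "y \<in> binvecs (Suc n)"
  shows "y(n := undefined) \<in> binvecs n" "y n \<in> {0,1}"
  using assms unfolding binvecs_def by (auto simp: PiE_iff extensional_def)

lemma inj_upd: "inj_on (\<lambda>x. x(n := j)) (binvecs n)"
proof (rule inj_onI)
  fix x y assume x: "x \<in> binvecs n" and y: "y \<in> binvecs n" and e: "x(n := j) = y(n := j)"
  show "x = y"
  proof
    fix i show "x i = y i"
    proof (cases "i = n")
      case True
      then show ?thesis using x y unfolding binvecs_def by (auto simp: PiE_iff extensional_def)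
    next
      case False
      then show ?thesis using fun_cong[OF e, of i] by simp
    qed
  qed
qed

lemma card_slices:
  assumes "F \<subseteq> binvecs (Suc n)"
  shows "card F = card (slice n F 0) + card (slice n F 1)"
proof -
  have F: "F = (\<lambda>x. x(n := 0)) ` slice n F 0 \<union> (\<lambda>x. x(n := 1)) ` slice n F 1" (is "F = ?R")
  proof
    show "F \<subseteq> ?R"
    proof
      fix y assume yF: "y \<in> F"
      then have y: "y \<in> binvecs (Suc n)" using assms by auto
      have eq: "y = (y(n:=undefined))(n := y n)" by simp
      from binvecs_Suc_decomp[OF y] consider "y n = 0" | "y n = 1" by auto
      then show "y \<in> (\<lambda>x. x(n := 0)) ` slice n F 0 \<union> (\<lambda>x. x(n := 1)) ` slice n F 1"
      proof cases
        case 1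
        then have "y = (y(n:=undefined))(n := 0)" using eq by simp
        then show ?thesis using binvecs_Suc_decomp[OF y] yF unfolding slice_def
          by (intro UnI1 image_eqI[where x="y(n:=undefined)"]) auto
      next
        case 2
        then have "y = (y(n:=undefined))(n := 1)" using eq by simp
        then show ?thesis using binvecs_Suc_decomp[OF y] yF unfolding slice_def
          by (intro UnI2 image_eqI[where x="y(n:=undefined)"]) auto
      qed
    qed
  qed (auto simp: slice_def)
  have d: "(\<lambda>x. x(n := 0)) ` slice n F 0 \<inter> (\<lambda>x. x(n := 1)) ` slice n F 1 = {}"
  proof (rule ccontr)
    assume "\<not> ?thesis"
    then obtain a b where "a(n := (0::int)) = b(n := 1)" by blast
    from fun_cong[OF this, of n] show False by simp
  qed
  have "card F = card ((\<lambda>x. x(n := 0)) ` slice n F 0) + card ((\<lambda>x. x(n := 1)) ` slice n F 1)"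
    by (subst F, rule card_Un_disjoint) (use d in \<open>auto simp: slice_def intro!: finite_imageI\<close>)
  also have "\<dots> = card (slice n F 0) + card (slice n F 1)"
    by (subst card_image, rule inj_on_subset[OF inj_upd], auto simp: slice_def)+
  finally show ?thesis .
qed

lemma sum_of_bool_card: "finite A \<Longrightarrow> S \<subseteq> A \<Longrightarrow> (\<Sum>w\<in>A. (if w \<in> S then 1 else 0::nat)) = card S"
  by (simp add: sum.If_cases Int_absorb1)

lemma slice_sub: "slice n F j \<subseteq> binvecs n"
  unfolding slice_def by auto

lemma mod_eq0_dvd: "(z::int) mod m = 0 \<longleftrightarrow> m dvd z"
  by auto

lemma CC_sub: "CC p n G \<subseteq> VV p n" by (auto simp: CC_def)

lemma CC_slice:
  assumes "w(n := a) \<in> CC p (Suc n) F" "w \<in> VV p n" "j \<in> {0,1}"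
  shows "w \<in> CC p n (slice n F j)"
proof -
  from assms(1) obtain s where s: "\<forall>x\<in>F. (dot (Suc n) (w(n := a)) x - s) mod int p = 0"
    unfolding CC_def by auto
  have "\<forall>x\<in>slice n F j. (dot n w x - (s - a * j)) mod int p = 0"
  proof
    fix x assume "x \<in> slice n F j"
    then have "x(n := j) \<in> F" unfolding slice_def by auto
    with s have "(dot (Suc n) (w(n := a)) (x(n := j)) - s) mod int p = 0" by auto
    then show "(dot n w x - (s - a * j)) mod int p = 0" by (simp add: dot_upd algebra_simps)
  qed
  then show ?thesis using assms(2) unfolding CC_def by auto
qed

lemma CC_step_p:
  assumes "j \<in> {0,1}"
  shows "card (CC p (Suc n) F) \<le> p * card (CC p n (slice n F j))"
proof -
  have "card (CC p (Suc n) F) \<le> (\<Sum>w\<in>VV p n. card {a\<in>{0..<int p}. w(n:=a) \<in> CC p (Suc n) F})"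
    by (rule count_split) (auto simp: CC_def)
  also have "\<dots> \<le> (\<Sum>w\<in>VV p n. p * (if w \<in> CC p n (slice n F j) then 1 else 0))"
  proof (rule sum_mono)
    fix w assume w: "w \<in> VV p n"
    show "card {a\<in>{0..<int p}. w(n:=a) \<in> CC p (Suc n) F} \<le> p * (if w \<in> CC p n (slice n F j) then 1 else 0)"
    proof (cases "w \<in> CC p n (slice n F j)")
      case True
      have "card {a\<in>{0..<int p}. w(n:=a) \<in> CC p (Suc n) F} \<le> card {0..<int p}"
        by (rule card_mono) auto
      moreover have "card {0..<int p} = p" by simp
      ultimately show ?thesis using True by simp
    next
      case False
      then have "{a\<in>{0..<int p}. w(n:=a) \<in> CC p (Suc n) F} = {}"
        using CC_slice[OF _ w assms] by blast
      then have "card {a\<in>{0..<int p}. w(n:=a) \<in> CC p (Suc n) F} = 0" by (metis card.empty)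
      then show ?thesis using False by simp
    qed
  qed
  also have "\<dots> = p * (\<Sum>w\<in>VV p n. (if w \<in> CC p n (slice n F j) then 1 else 0))"
    by (simp add: sum_distrib_left)
  also have "\<dots> = p * card (CC p n (slice n F j))"
    using sum_of_bool_card[OF finite_VV CC_sub] by simp
  finally show ?thesis .
qed

lemma CC_step_1:
  assumes "j \<in> {0,1}" "slice n F 0 \<noteq> {}" "slice n F 1 \<noteq> {}"
  shows "card (CC p (Suc n) F) \<le> card (CC p n (slice n F j))"
proof -
  obtain x0 where x0: "x0 \<in> slice n F 0" using assms by auto
  obtain x1 where x1: "x1 \<in> slice n F 1" using assms by auto
  have "card (CC p (Suc n) F) \<le> (\<Sum>w\<in>VV p n. card {a\<in>{0..<int p}. w(n:=a) \<in> CC p (Suc n) F})"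
    by (rule count_split) (auto simp: CC_def)
  also have "\<dots> \<le> (\<Sum>w\<in>VV p n. (if w \<in> CC p n (slice n F j) then 1 else 0))"
  proof (rule sum_mono)
    fix w assume w: "w \<in> VV p n"
    let ?A = "{a\<in>{0..<int p}. w(n:=a) \<in> CC p (Suc n) F}"
    have finA: "finite ?A" by (rule finite_subset[of _ "{0..<int p}"]) auto
    have all: "\<forall>a\<in>?A. \<forall>b\<in>?A. a = b"
      proof (intro ballI)
        fix a b assume a: "a \<in> ?A" and b: "b \<in> ?A"
        have key: "int p dvd (dot n w x1 + c - dot n w x0)" if "c \<in> ?A" for c
        proof -
          from that obtain s where s: "\<forall>x\<in>F. (dot (Suc n) (w(n := c)) x - s) mod int p = 0"
            unfolding CC_def by auto
          have "x0(n := 0) \<in> F" "x1(n := 1) \<in> F" using x0 x1 unfolding slice_def by auto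
          with s have "int p dvd (dot n w x0 - s)" "int p dvd (dot n w x1 + c - s)"
            by (auto simp: dot_upd)
          then have "int p dvd ((dot n w x1 + c - s) - (dot n w x0 - s))" using dvd_diff by blast
          then show ?thesis by (metis add_diff_eq diff_diff_eq2 diff_add_cancel)
        qed
        have "int p dvd ((dot n w x1 + a - dot n w x0) - (dot n w x1 + b - dot n w x0))"
          by (rule dvd_diff[OF key[OF a] key[OF b]])
        then have "int p dvd (a - b)" by simp
        then have "a mod int p = b mod int p" by (simp add: mod_eq_dvd_iff)
        then show "a = b" using a b by simp
      qed
    have le1: "card ?A \<le> 1" using card_le_Suc0_iff_eq[OF finA] all by simp
    show "card ?A \<le> (if w \<in> CC p n (slice n F j) then 1 else 0)"
    proof (cases "w \<in> CC p n (slice n F j)")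
      case True
      then show ?thesis using le1 by simp
    next
      case False
      then have "?A = {}" using CC_slice[OF _ w assms(1)] by blast
      then have "card ?A = 0" by (metis card.empty)
      then show ?thesis using False by simp
    qed
  qed
  also have "\<dots> = card (CC p n (slice n F j))"
    using sum_of_bool_card[OF finite_VV CC_sub] by simp
  finally show ?thesis .
qed

lemma binvecs_0: "binvecs 0 = {\<lambda>_. undefined}"
  unfolding binvecs_def by simp

lemma VV_0: "VV p 0 = {\<lambda>_. undefined}"
  unfolding VV_def by simp

lemma card_le_one_of_0: assumes "F \<subseteq> binvecs 0" "F \<noteq> {}" shows "card F = 1"
proof -
  have "F = {\<lambda>_. undefined}" using assms unfolding binvecs_0 by (auto dest!: subset_singletonD)
  then show ?thesis by simp
qed

lemma CC_bound:
  assumes "p \<ge> 2"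
  shows "F \<subseteq> binvecs n \<Longrightarrow> F \<noteq> {} \<Longrightarrow>
    real (card (CC p n F)) * real (card F) powr log 2 p \<le> real p ^ n"
proof (induction n arbitrary: F)
  case 0
  then have "card F = 1" by (rule card_le_one_of_0)
  moreover have "card (CC p 0 F) \<le> 1"
    using card_mono[OF finite_VV CC_sub, of p 0 F] by (simp add: VV_0)
  ultimately show ?case by simp
next
  case (Suc n)
  define l where "l = log 2 p"
  have pl: "2 powr l = real p" unfolding l_def using assms by simp
  have l0: "l \<ge> 0" unfolding l_def using assms by simp
  have cF: "card F = card (slice n F 0) + card (slice n F 1)" by (rule card_slices[OF Suc.prems(1)])
  have finF: "finite F" using Suc.prems(1) by (rule finite_subset) simp
  have Fpos: "card F > 0" using Suc.prems finF by auto
  obtain j where j: "j \<in> {0,1}" "slice n F j \<noteq> {}" and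
    cases: "(card F = card (slice n F j) \<and> card (CC p (Suc n) F) \<le> p * card (CC p n (slice n F j)))
       \<or> (card F \<le> 2 * card (slice n F j) \<and> card (CC p (Suc n) F) \<le> card (CC p n (slice n F j)))"
  proof (cases "slice n F 0 = {}")
    case True
    then have "card F = card (slice n F 1)" using cF by simp
    moreover then have "slice n F 1 \<noteq> {}" using Fpos by auto
    ultimately show ?thesis by (intro that[of 1]) (use CC_step_p[of 1 p n F] in auto)
  next
    case F0: False
    show ?thesis
    proof (cases "slice n F 1 = {}")
      case True
      then have "card F = card (slice n F 0)" using cF by simp
      then show ?thesis by (intro that[of 0]) (use CC_step_p[of 0 p n F] F0 in auto)
    next
      case F1: False
      show ?thesis
      proof (cases "card (slice n F 1) \<le> card (slice n F 0)")
        case True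
        then show ?thesis by (intro that[of 0]) (use CC_step_1[of 0 n F p] F0 F1 cF in auto)
      next
        case False
        then show ?thesis by (intro that[of 1]) (use CC_step_1[of 1 n F p] F0 F1 cF in auto)
      qed
    qed
  qed
  let ?G = "slice n F j"
  have IH: "real (card (CC p n ?G)) * real (card ?G) powr l \<le> real p ^ n"
    using Suc.IH[OF slice_sub j(2)] unfolding l_def .
  from cases show ?case
  proof
    assume h: "card F = card ?G \<and> card (CC p (Suc n) F) \<le> p * card (CC p n ?G)"
    have "real (card (CC p (Suc n) F)) * real (card F) powr l
        \<le> (real p * real (card (CC p n ?G))) * real (card ?G) powr l"
    proof -
      have e: "real (card F) powr l = real (card ?G) powr l" using h by simp
      have "real (card (CC p (Suc n) F)) \<le> real (p * card (CC p n ?G))" using h by linarith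
      then have "real (card (CC p (Suc n) F)) \<le> real p * real (card (CC p n ?G))" by simp
      then show ?thesis unfolding e by (rule mult_right_mono) simp
    qed
    also have "\<dots> = real p * (real (card (CC p n ?G)) * real (card ?G) powr l)" by simp
    also have "\<dots> \<le> real p * real p ^ n" using IH by (intro mult_left_mono) auto
    finally show ?case unfolding l_def by simp
  next
    assume h: "card F \<le> 2 * card ?G \<and> card (CC p (Suc n) F) \<le> card (CC p n ?G)"
    have "real (card F) powr l \<le> real (2 * card ?G) powr l"
      using h l0 by (intro powr_mono2) auto
    also have "\<dots> = 2 powr l * real (card ?G) powr l"
      by (simp add: powr_mult)
    also have "\<dots> = real p * real (card ?G) powr l" using pl by simp
    finally have a: "real (card F) powr l \<le> real p * real (card ?G) powr l" .
    have "real (card (CC p (Suc n) F)) * real (card F) powr l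
        \<le> real (card (CC p n ?G)) * (real p * real (card ?G) powr l)"
      using h a by (intro mult_mono) auto
    also have "\<dots> = real p * (real (card (CC p n ?G)) * real (card ?G) powr l)" by simp
    also have "\<dots> \<le> real p * real p ^ n" using IH by (intro mult_left_mono) auto
    finally show ?case unfolding l_def by simp
  qed
qed

lemma odd_dvd2: fixes z :: int assumes "odd p" "int p dvd 2*z" shows "int p dvd z"
proof -
  obtain k where k: "p = 2*k+1" using assms(1) oddE by blast
  have "int p dvd (int k + 1) * (2*z)" using assms(2) by simp
  moreover have "(int k + 1) * (2*z) = int p * z + z" using k by (simp add: algebra_simps)
  ultimately have "int p dvd int p * z + z" by simp
  then show ?thesis by (simp add: dvd_add_right_iff)
qed

lemma modv: "(z::int) mod m = v \<Longrightarrow> m dvd z - v"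
  by (metis dvd_minus_mod)

lemma pair_sum:
  fixes z z' m :: int
  assumes "z mod m \<in> {0,1}" "z' mod m \<in> {0,1}" "\<not> m dvd (z - z')"
  shows "m dvd (z + z' - 1)"
proof -
  have "z mod m \<noteq> z' mod m" using assms(3) by (simp add: mod_eq_dvd_iff)
  then have s: "z mod m + z' mod m = 1" using assms(1,2) by auto
  have "m dvd (z - z mod m) + (z' - z' mod m)"
    by (intro dvd_add) (simp_all add: modv)
  then show ?thesis using s by (simp add: algebra_simps)
qed

lemma UU_sub: "UU p n G \<subseteq> VV p n" by (auto simp: UU_def)

lemma UU_slice:
  assumes "w(n := a) \<in> UU p (Suc n) E" "w \<in> VV p n" "j \<in> {0,1}"
  shows "w \<in> UU p n (slice n E j)"
proof -
  from assms(1) obtain t where t: "\<forall>x\<in>E. (dot (Suc n) (w(n := a)) x - t) mod int p \<in> {0,1}"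
    unfolding UU_def by auto
  have "\<forall>x\<in>slice n E j. (dot n w x - (t - a * j)) mod int p \<in> {0,1}"
  proof
    fix x assume "x \<in> slice n E j"
    then have "x(n := j) \<in> E" unfolding slice_def by auto
    with t have "(dot (Suc n) (w(n := a)) (x(n := j)) - t) mod int p \<in> {0,1}" by auto
    moreover have "dot (Suc n) (w(n := a)) (x(n := j)) - t = dot n w x - (t - a * j)"
      by (simp add: dot_upd algebra_simps)
    ultimately show "(dot n w x - (t - a * j)) mod int p \<in> {0,1}" by simp
  qed
  then show ?thesis using assms(2) unfolding UU_def by auto
qed

lemma UU_step_p:
  assumes "j \<in> {0,1}"
  shows "card (UU p (Suc n) E) \<le> p * card (UU p n (slice n E j))"
proof -
  have "card (UU p (Suc n) E) \<le> (\<Sum>w\<in>VV p n. card {a\<in>{0..<int p}. w(n:=a) \<in> UU p (Suc n) E})"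
    by (rule count_split) (auto simp: UU_def)
  also have "\<dots> \<le> (\<Sum>w\<in>VV p n. p * (if w \<in> UU p n (slice n E j) then 1 else 0))"
  proof (rule sum_mono)
    fix w assume w: "w \<in> VV p n"
    show "card {a\<in>{0..<int p}. w(n:=a) \<in> UU p (Suc n) E} \<le> p * (if w \<in> UU p n (slice n E j) then 1 else 0)"
    proof (cases "w \<in> UU p n (slice n E j)")
      case True
      have "card {a\<in>{0..<int p}. w(n:=a) \<in> UU p (Suc n) E} \<le> card {0..<int p}"
        by (rule card_mono) auto
      moreover have "card {0..<int p} = p" by simp
      ultimately show ?thesis using True by simp
    next
      case False
      then have "{a\<in>{0..<int p}. w(n:=a) \<in> UU p (Suc n) E} = {}"
        using UU_slice[OF _ w assms] by blast
      then have "card {a\<in>{0..<int p}. w(n:=a) \<in> UU p (Suc n) E} = 0" by (metis card.empty)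
      then show ?thesis using False by simp
    qed
  qed
  also have "\<dots> = p * (\<Sum>w\<in>VV p n. (if w \<in> UU p n (slice n E j) then 1 else 0))"
    by (simp add: sum_distrib_left)
  also have "\<dots> = p * card (UU p n (slice n E j))"
    using sum_of_bool_card[OF finite_VV UU_sub] by simp
  finally show ?thesis .
qed

lemma not_CC_witness:
  assumes "w \<notin> CC p n G" "w \<in> VV p n" "G \<noteq> {}"
  obtains x x' where "x \<in> G" "x' \<in> G" "\<not> int p dvd (dot n w x - dot n w x')"
proof -
  obtain x where x: "x \<in> G" using assms(3) by auto
  have "\<not> (\<forall>x'\<in>G. (dot n w x' - dot n w x) mod int p = 0)"
    using assms(1,2) unfolding CC_def by auto
  then obtain x' where x': "x' \<in> G" "(dot n w x' - dot n w x) mod int p \<noteq> 0" by auto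
  then have "\<not> int p dvd (dot n w x' - dot n w x)" by auto
  then show ?thesis using that[of x' x] x x'(1) by blast
qed

lemma UU_step_main:
  assumes p: "odd p" "p \<ge> 2" and j: "j \<in> {0,1}" and ne: "slice n E 0 \<noteq> {}" "slice n E 1 \<noteq> {}"
  shows "card (UU p (Suc n) E) \<le> card (UU p n (slice n E j))
           + 2 * card (CC p n (slice n E 0)) + 2 * card (CC p n (slice n E 1))"
proof -
  obtain x0 where x0: "x0 \<in> slice n E 0" using ne by auto
  obtain x1 where x1: "x1 \<in> slice n E 1" using ne by auto
  let ?I = "\<lambda>S w. (if w \<in> S then 1 else 0::nat)"
  have "card (UU p (Suc n) E) \<le> (\<Sum>w\<in>VV p n. card {a\<in>{0..<int p}. w(n:=a) \<in> UU p (Suc n) E})"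
    by (rule count_split) (auto simp: UU_def)
  also have "\<dots> \<le> (\<Sum>w\<in>VV p n. ?I (UU p n (slice n E j)) w + 2 * ?I (CC p n (slice n E 0)) w
                      + 2 * ?I (CC p n (slice n E 1)) w)"
  proof (rule sum_mono)
    fix w assume w: "w \<in> VV p n"
    let ?A = "{a\<in>{0..<int p}. w(n:=a) \<in> UU p (Suc n) E}"
    have finA: "finite ?A" by (rule finite_subset[of _ "{0..<int p}"]) auto
    have wit: "\<exists>t. (dot n w x - t) mod int p \<in> {0,1} \<and> (dot n w y + a - t) mod int p \<in> {0,1}
                 \<and> (\<forall>x\<in>slice n E 0. (dot n w x - t) mod int p \<in> {0,1})
                 \<and> (\<forall>y\<in>slice n E 1. (dot n w y + a - t) mod int p \<in> {0,1})"
      if a: "a \<in> ?A" and x: "x \<in> slice n E 0" and y: "y \<in> slice n E 1" for a x y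
    proof -
      from a obtain t where t: "\<forall>z\<in>E. (dot (Suc n) (w(n := a)) z - t) mod int p \<in> {0,1}"
        unfolding UU_def by auto
      have h0: "\<forall>x\<in>slice n E 0. (dot n w x - t) mod int p \<in> {0,1}"
      proof
        fix x assume "x \<in> slice n E 0"
        then have "x(n := 0) \<in> E" unfolding slice_def by auto
        with t show "(dot n w x - t) mod int p \<in> {0,1}" by (auto simp: dot_upd)
      qed
      have h1: "\<forall>y\<in>slice n E 1. (dot n w y + a - t) mod int p \<in> {0,1}"
      proof
        fix y assume "y \<in> slice n E 1"
        then have "y(n := 1) \<in> E" unfolding slice_def by auto
        with t show "(dot n w y + a - t) mod int p \<in> {0,1}" by (auto simp: dot_upd)
      qed
      show ?thesis using h0 h1 x y by blast
    qed
    have le3: "card ?A \<le> 3"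
    proof -
      let ?f = "\<lambda>e. (dot n w x0 - dot n w x1 + e) mod int p"
      have "?A \<subseteq> ?f ` {-1,0,1}"
      proof
        fix a assume a: "a \<in> ?A"
        obtain t where t: "(dot n w x0 - t) mod int p \<in> {0,1}" "(dot n w x1 + a - t) mod int p \<in> {0,1}"
          using wit[OF a x0 x1] by (elim exE conjE) (rule that)
        define al where "al = (dot n w x0 - t) mod int p"
        define be where "be = (dot n w x1 + a - t) mod int p"
        have d1: "int p dvd (dot n w x0 - t - al)" unfolding al_def by (rule modv) simp
        have d2: "int p dvd (dot n w x1 + a - t - be)" unfolding be_def by (rule modv) simp
        have "int p dvd ((dot n w x1 + a - t - be) - (dot n w x0 - t - al))" using d1 d2 by (rule dvd_diff[rotated])
        then have "int p dvd (a - (dot n w x0 - dot n w x1 + (be - al)))" by (simp add: algebra_simps)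
        then have "a mod int p = (dot n w x0 - dot n w x1 + (be - al)) mod int p" by (simp add: mod_eq_dvd_iff)
        moreover have "a mod int p = a" using a by simp
        moreover have "be - al \<in> {-1,0,1}"
        proof -
          have "al \<in> {0,1}" "be \<in> {0,1}" using t by (simp_all only: al_def be_def)
          then show ?thesis by auto
        qed
        ultimately have "a = ?f (be - al)" by simp
        then show "a \<in> ?f ` {-1,0,1}" using \<open>be - al \<in> {-1,0,1}\<close> by (rule image_eqI)
      qed
      then have "card ?A \<le> card (?f ` {-1,0,1})" by (rule card_mono[rotated]) simp
      also have "\<dots> \<le> card {-1,0,1::int}" by (rule card_image_le) simp
      also have "\<dots> = 3" by simp
      finally show ?thesis .
    qed
    show "card ?A \<le> ?I (UU p n (slice n E j)) w + 2 * ?I (CC p n (slice n E 0)) w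
                      + 2 * ?I (CC p n (slice n E 1)) w"
    proof (cases "?A = {}")
      case True
      then have "card ?A = 0" by (metis card.empty)
      then show ?thesis by simp
    next
      case False
      then obtain a0 where "a0 \<in> ?A" by auto
      then have inU: "w \<in> UU p n (slice n E j)" using UU_slice[OF _ w j] by auto
      show ?thesis
      proof (cases "w \<in> CC p n (slice n E 0) \<or> w \<in> CC p n (slice n E 1)")
        case True
        then have "?I (CC p n (slice n E 0)) w + ?I (CC p n (slice n E 1)) w \<ge> 1" by auto
        then show ?thesis using le3 inU by simp
      next
        case False
        then have n0: "w \<notin> CC p n (slice n E 0)" and n1: "w \<notin> CC p n (slice n E 1)" by auto
        obtain y0 y0' where y0: "y0 \<in> slice n E 0" "y0' \<in> slice n E 0"
          "\<not> int p dvd (dot n w y0 - dot n w y0')"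
          using not_CC_witness[OF n0 w ne(1)] by metis
        obtain y1 y1' where y1: "y1 \<in> slice n E 1" "y1' \<in> slice n E 1"
          "\<not> int p dvd (dot n w y1 - dot n w y1')"
          using not_CC_witness[OF n1 w ne(2)] by metis
        have key: "\<exists>t. int p dvd (dot n w y0 + dot n w y0' - 2 * t - 1)
                    \<and> int p dvd (dot n w y1 + dot n w y1' + 2 * a - 2 * t - 1)" if a: "a \<in> ?A" for a
        proof -
          obtain t where t0: "\<forall>x\<in>slice n E 0. (dot n w x - t) mod int p \<in> {0,1}"
            and t1: "\<forall>y\<in>slice n E 1. (dot n w y + a - t) mod int p \<in> {0,1}"
            using wit[OF a x0 x1] by (elim exE conjE) (rule that)
          have "int p dvd ((dot n w y0 - t) + (dot n w y0' - t) - 1)"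
            by (rule pair_sum) (use t0 y0 in auto)
          moreover have "int p dvd ((dot n w y1 + a - t) + (dot n w y1' + a - t) - 1)"
            by (rule pair_sum) (use t1 y1 in auto)
          ultimately show ?thesis by (intro exI[of _ t]) (simp add: algebra_simps)
        qed
        have "\<forall>a\<in>?A. \<forall>b\<in>?A. a = b"
        proof (intro ballI)
          fix a b assume a: "a \<in> ?A" and b: "b \<in> ?A"
          obtain t where ta: "int p dvd (dot n w y0 + dot n w y0' - 2 * t - 1)"
            "int p dvd (dot n w y1 + dot n w y1' + 2 * a - 2 * t - 1)" using key[OF a] by (elim exE conjE) (rule that)
          obtain t' where tb: "int p dvd (dot n w y0 + dot n w y0' - 2 * t' - 1)"
            "int p dvd (dot n w y1 + dot n w y1' + 2 * b - 2 * t' - 1)" using key[OF b] by (elim exE conjE) (rule that)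
          have "int p dvd ((dot n w y0 + dot n w y0' - 2 * t' - 1) - (dot n w y0 + dot n w y0' - 2 * t - 1))"
            using ta(1) tb(1) by (rule dvd_diff[rotated])
          then have "int p dvd 2 * (t - t')" by (simp add: algebra_simps)
          then have tt: "int p dvd (t - t')" by (rule odd_dvd2[OF p(1)])
          have "int p dvd ((dot n w y1 + dot n w y1' + 2 * a - 2 * t - 1) - (dot n w y1 + dot n w y1' + 2 * b - 2 * t' - 1))"
            using ta(2) tb(2) by (rule dvd_diff)
          then have "int p dvd 2 * (a - b) - 2 * (t - t')" by (simp add: algebra_simps)
          moreover have "int p dvd 2 * (t - t')" using tt by (rule dvd_mult)
          ultimately have "int p dvd (2 * (a - b) - 2 * (t - t')) + 2 * (t - t')" by (rule dvd_add)
          then have "int p dvd 2 * (a - b)" by simp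
          then have "int p dvd (a - b)" by (rule odd_dvd2[OF p(1)])
          then have "a mod int p = b mod int p" by (simp add: mod_eq_dvd_iff)
          then show "a = b" using a b by simp
        qed
        then have "card ?A \<le> 1" using card_le_Suc0_iff_eq[OF finA] by simp
        then show ?thesis using inU n0 n1 by simp
      qed
    qed
  qed
  also have "\<dots> = (\<Sum>w\<in>VV p n. ?I (UU p n (slice n E j)) w) + 2 * (\<Sum>w\<in>VV p n. ?I (CC p n (slice n E 0)) w)
                      + 2 * (\<Sum>w\<in>VV p n. ?I (CC p n (slice n E 1)) w)"
    by (simp add: sum.distrib sum_distrib_left)
  also have "\<dots> = card (UU p n (slice n E j)) + 2 * card (CC p n (slice n E 0)) + 2 * card (CC p n (slice n E 1))"
    using sum_of_bool_card[OF finite_VV UU_sub] sum_of_bool_card[OF finite_VV CC_sub] by simp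
  finally show ?thesis .
qed

lemma pow2_powr_log: assumes "p \<ge> 2" shows "(real (2 ^ m)) powr (log 2 p) = real p ^ m"
proof -
  have "(real (2 ^ m)) powr (log 2 p) = (2 powr (log 2 p)) ^ m"
    by (simp add: powr_realpow[symmetric] powr_powr mult.commute)
  also have "\<dots> = real p ^ m" using assms by simp
  finally show ?thesis .
qed

lemma UU_bound:
  assumes p: "odd p" "p \<ge> 2"
  shows "E \<subseteq> binvecs n \<Longrightarrow> E \<noteq> {} \<Longrightarrow>
    real (card (UU p n E)) * real (card E) powr (2 * log 2 p) \<le> (1 + 4 * real p * real n) * real p ^ (2 * n)"
proof (induction n arbitrary: E)
  case 0
  then have "card E = 1" by (rule card_le_one_of_0)
  moreover have "card (UU p 0 E) \<le> 1"
    using card_mono[OF finite_VV UU_sub, of p 0 E] by (simp add: VV_0)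
  ultimately show ?case by simp
next
  case (Suc n)
  define l where "l = log 2 p"
  have pl: "2 powr l = real p" unfolding l_def using p by simp
  have l0: "l \<ge> 0" unfolding l_def using p by simp
  have pp: "real p \<ge> 2" using p by simp
  define N where "N = card E"
  define N0 where "N0 = card (slice n E 0)"
  define N1 where "N1 = card (slice n E 1)"
  have cF: "N = N0 + N1" unfolding N_def N0_def N1_def by (rule card_slices[OF Suc.prems(1)])
  have finE: "finite E" using Suc.prems(1) by (rule finite_subset) simp
  have Npos: "N > 0" using Suc.prems finE unfolding N_def by auto
  have Nle: "N \<le> 2 ^ Suc n" unfolding N_def
    using card_mono[OF finite_binvecs Suc.prems(1)] by (simp add: card_binvecs)
  have powa: "x powr (2 * l) = x powr l * x powr l" for x :: real
    by (simp add: powr_add[symmetric])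
  have Nl: "real N powr l \<le> real p ^ Suc n"
  proof -
    have "real N \<le> real (2 ^ Suc n)" using Nle by (simp only: of_nat_le_iff)
    then have "real N powr l \<le> real (2 ^ Suc n) powr l" using l0 by (intro powr_mono2) auto
    also have "\<dots> = real p ^ Suc n" unfolding l_def by (rule pow2_powr_log[OF p(2)])
    finally show ?thesis .
  qed
  have mono_step: "real N powr l \<le> c powr l * real M powr l" if "real N \<le> c * real M" "c \<ge> 0" for c M
  proof -
    have "real N powr l \<le> (c * real M) powr l" using that l0 by (intro powr_mono2) auto
    also have "\<dots> = c powr l * real M powr l" using that by (simp add: powr_mult)
    finally show ?thesis .
  qed
  show ?case
  proof (cases "4 * N0 < N \<or> 4 * N1 < N")
    case True
    obtain j where j: "j \<in> {0,1}" and Nj: "3 * N < 4 * card (slice n E j)"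
    proof -
      from True show ?thesis
      proof
        assume "4 * N0 < N"
        then have "3 * N < 4 * card (slice n E 1)" using cF unfolding N1_def by simp
        then show ?thesis by (intro that[of 1]) auto
      next
        assume "4 * N1 < N"
        then have "3 * N < 4 * card (slice n E 0)" using cF unfolding N0_def by simp
        then show ?thesis by (intro that[of 0]) auto
      qed
    qed
    then have jne: "slice n E j \<noteq> {}" using Npos by auto
    let ?G = "slice n E j"
    have IH: "real (card (UU p n ?G)) * real (card ?G) powr (2 * l) \<le> (1 + 4 * real p * real n) * real p ^ (2 * n)"
      using Suc.IH[OF slice_sub jne] unfolding l_def .
    have st: "card (UU p (Suc n) E) \<le> p * card (UU p n ?G)" by (rule UU_step_p[OF j])
    have "real N \<le> (4/3) * real (card ?G)" using Nj by simp
    then have "real N powr (2*l) \<le> ((4/3) * real (card ?G)) powr (2*l)" using l0 by (intro powr_mono2) auto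
    also have "\<dots> = (4/3) powr (2*l) * real (card ?G) powr (2*l)" by (rule powr_mult)
    also have "\<dots> \<le> real p * real (card ?G) powr (2*l)"
    proof (rule mult_right_mono)
      have e1: "((4/3::real) powr 2) powr l = (4/3) powr (2*l)" by (rule powr_powr)
      have e2: "(4/3::real) powr 2 = 16/9" by (simp add: power2_eq_square)
      have "(4/3::real) powr (2*l) = (16/9) powr l" using e1 e2 by metis
      also have "(16/9::real) powr l \<le> 2 powr l" using l0 by (intro powr_mono2) auto
      finally show "(4/3::real) powr (2*l) \<le> real p" using pl by simp
    qed simp
    finally have b: "real N powr (2*l) \<le> real p * real (card ?G) powr (2*l)" .

    have "real (card (UU p (Suc n) E)) * real N powr (2*l)
        \<le> (real p * real (card (UU p n ?G))) * (real p * real (card ?G) powr (2*l))"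
    proof (rule mult_mono)
      have "real (card (UU p (Suc n) E)) \<le> real (p * card (UU p n ?G))" using st by linarith
      then show "real (card (UU p (Suc n) E)) \<le> real p * real (card (UU p n ?G))" by simp
    qed (use b in auto)
    also have "\<dots> = real p ^ 2 * (real (card (UU p n ?G)) * real (card ?G) powr (2 * l))"
      by (simp add: power2_eq_square)
    also have "\<dots> \<le> real p ^ 2 * ((1 + 4 * real p * real n) * real p ^ (2 * n))"
      using IH by (intro mult_left_mono) auto
    also have "\<dots> = (1 + 4 * real p * real n) * real p ^ (2 * Suc n)"
      by (simp add: power_add power2_eq_square)
    also have "\<dots> \<le> (1 + 4 * real p * real (Suc n)) * real p ^ (2 * Suc n)"
      by (intro mult_right_mono) (auto simp: algebra_simps)
    finally show ?thesis unfolding N_def l_def .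
  next
    case False
    then have b0: "N \<le> 4 * N0" and b1: "N \<le> 4 * N1" by auto
    have ne0: "slice n E 0 \<noteq> {}" using b0 Npos unfolding N0_def by auto
    have ne1: "slice n E 1 \<noteq> {}" using b1 Npos unfolding N1_def by auto
    obtain j where j: "j \<in> {0,1}" and Nj: "N \<le> 2 * card (slice n E j)"
    proof (cases "N1 \<le> N0")
      case True
      then have "N \<le> 2 * card (slice n E 0)" using cF unfolding N0_def by simp
      then show ?thesis by (intro that[of 0]) auto
    next
      case False
      then have "N \<le> 2 * card (slice n E 1)" using cF unfolding N1_def by simp
      then show ?thesis by (intro that[of 1]) auto
    qed
    let ?G = "slice n E j"
    have IH: "real (card (UU p n ?G)) * real (card ?G) powr (2 * l) \<le> (1 + 4 * real p * real n) * real p ^ (2 * n)"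
      using Suc.IH[OF slice_sub] j by (auto simp: l_def ne0 ne1)
    have st: "card (UU p (Suc n) E) \<le> card (UU p n ?G)
           + 2 * card (CC p n (slice n E 0)) + 2 * card (CC p n (slice n E 1))"
      by (rule UU_step_main[OF p j ne0 ne1])
    have "real N powr l \<le> 2 powr l * real (card ?G) powr l" using Nj by (intro mono_step) auto
    then have a: "real N powr l \<le> real p * real (card ?G) powr l" using pl by simp
    have "real N powr (2*l) \<le> (real p * real (card ?G) powr l) * (real p * real (card ?G) powr l)"
      unfolding powa using a by (intro mult_mono) auto
    also have "\<dots> = real p ^ 2 * real (card ?G) powr (2*l)" by (simp add: powa power2_eq_square)
    finally have bG: "real N powr (2*l) \<le> real p ^ 2 * real (card ?G) powr (2*l)" .
    have T1: "real (card (UU p n ?G)) * real N powr (2*l) \<le> (1 + 4 * real p * real n) * real p ^ (2 * Suc n)"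
    proof -
      have "real (card (UU p n ?G)) * real N powr (2*l) \<le> real (card (UU p n ?G)) * (real p ^ 2 * real (card ?G) powr (2*l))"
        using bG by (intro mult_left_mono) auto
      also have "\<dots> = real p ^ 2 * (real (card (UU p n ?G)) * real (card ?G) powr (2*l))" by simp
      also have "\<dots> \<le> real p ^ 2 * ((1 + 4 * real p * real n) * real p ^ (2 * n))"
        using IH by (intro mult_left_mono) auto
      also have "\<dots> = (1 + 4 * real p * real n) * real p ^ (2 * Suc n)" by (simp add: power_add power2_eq_square)
      finally show ?thesis .
    qed
    have T2: "real (card (CC p n (slice n E i))) * real N powr (2*l) \<le> real p * real p ^ (2 * Suc n)"
      if i: "i \<in> {0,1}" "N \<le> 4 * card (slice n E i)" "slice n E i \<noteq> {}" for i
    proof -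
      have CCb: "real (card (CC p n (slice n E i))) * real (card (slice n E i)) powr l \<le> real p ^ n"
        using CC_bound[OF p(2) slice_sub i(3)] unfolding l_def .
      have "real N powr l \<le> 4 powr l * real (card (slice n E i)) powr l" using i by (intro mono_step) auto
      also have "4 powr l = real p ^ 2"
      proof -
        have "(4::real) powr l = (2 * 2) powr l" by simp
        also have "\<dots> = 2 powr l * 2 powr l" by (rule powr_mult)
        finally show ?thesis using pl by (simp add: power2_eq_square)
      qed
      finally have c: "real N powr l \<le> real p ^ 2 * real (card (slice n E i)) powr l" .
      have "real (card (CC p n (slice n E i))) * real N powr (2*l)
          = (real (card (CC p n (slice n E i))) * real N powr l) * real N powr l" by (simp add: powa)
      also have "\<dots> \<le> (real (card (CC p n (slice n E i))) * (real p ^ 2 * real (card (slice n E i)) powr l)) * real p ^ Suc n"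
        using c Nl by (intro mult_mono) auto
      also have "\<dots> = real p ^ 2 * (real (card (CC p n (slice n E i))) * real (card (slice n E i)) powr l) * real p ^ Suc n"
        by simp
      also have "\<dots> \<le> real p ^ 2 * real p ^ n * real p ^ Suc n"
        using CCb by (intro mult_right_mono mult_left_mono) auto
      also have "\<dots> = real p * real p ^ (2 * Suc n)" by (simp add: power_add power2_eq_square mult_2 power_mult_distrib)
      finally show ?thesis .
    qed
    have "real (card (UU p (Suc n) E)) * real N powr (2*l)
        \<le> (real (card (UU p n ?G)) + 2 * real (card (CC p n (slice n E 0))) + 2 * real (card (CC p n (slice n E 1)))) * real N powr (2*l)"
      using st by (intro mult_right_mono) (simp_all flip: of_nat_mult of_nat_add)
    also have "\<dots> = real (card (UU p n ?G)) * real N powr (2*l) + 2 * (real (card (CC p n (slice n E 0))) * real N powr (2*l))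
        + 2 * (real (card (CC p n (slice n E 1))) * real N powr (2*l))" by (simp add: algebra_simps)
    also have "\<dots> \<le> (1 + 4 * real p * real n) * real p ^ (2 * Suc n) + 2 * (real p * real p ^ (2 * Suc n))
        + 2 * (real p * real p ^ (2 * Suc n))"
      using T1 T2[of 0] T2[of 1] b0 b1 ne0 ne1 unfolding N0_def N1_def by (intro add_mono mult_left_mono) auto
    also have "\<dots> = (1 + 4 * real p * real (Suc n)) * real p ^ (2 * Suc n)" by (simp add: algebra_simps)
    finally show ?thesis unfolding N_def l_def .
  qed
qed

lemma pow_bound_nat: "n \<ge> 36 \<Longrightarrow> 625 * n ^ 4 \<le> (2::nat) ^ n"
proof (induction n rule: dec_induct)
  case base
  then show ?case by simp
next
  case (step n)
  have n3: "15 * n ^ 3 \<le> n ^ 4"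
  proof -
    have "15 * n ^ 3 \<le> n * n ^ 3" using step(1) by (intro mult_right_mono) auto
    moreover have "n * n ^ 3 = n ^ 4" by (simp add: eval_nat_numeral)
    ultimately show ?thesis by simp
  qed
  have "n ^ 2 \<le> n ^ 3" "n \<le> n ^ 3" "1 \<le> n ^ 3" using step(1)
    by (auto intro: power_increasing simp: eval_nat_numeral)
  moreover have "(Suc n) ^ 4 = n ^ 4 + 4 * n ^ 3 + 6 * n ^ 2 + 4 * n + 1"
    by (simp add: eval_nat_numeral algebra_simps)
  ultimately have "(Suc n) ^ 4 \<le> 2 * n ^ 4" using n3 by linarith
  then have "625 * (Suc n) ^ 4 \<le> 2 * (625 * n ^ 4)" by simp
  also have "\<dots> \<le> 2 * 2 ^ n" using step(3) by simp
  finally show ?case by simp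
qed

lemma lin_bound: assumes "d \<ge> 36" shows "5 * real d \<le> 2 powr (real d / 4)"
proof -
  have "real (625 * d ^ 4) \<le> real ((2::nat) ^ d)" using pow_bound_nat[OF assms] by (simp only: of_nat_le_iff)
  then have "(5 * real d) ^ 4 \<le> 2 ^ d" by (simp add: power_mult_distrib)
  also have "(2::real) ^ d = (2 powr (real d / 4)) ^ 4"
  proof -
    have "(2 powr (real d / 4)) ^ 4 = (2::real) powr (real 4 * (real d / 4))"
      by (rule powr_power) simp
    also have "\<dots> = 2 powr (real d)" by simp
    also have "\<dots> = 2 ^ d" by (rule powr_realpow) simp
    finally show ?thesis by simp
  qed
  finally have "(5 * real d) ^ Suc 3 \<le> (2 powr (real d / 4)) ^ Suc 3" by simp
  then show ?thesis by (rule power_le_imp_le_base) simp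
qed

lemma num_bound:
  fixes p d :: nat
  assumes p3: "p \<ge> 3" and hd: "36 * log 2 (real p) \<le> real d"
  shows "1 + 4 * real p * real d \<le> 2 powr (real d / 3 - 2 * log 2 (real p) * real d / (36 * (real p)\<^sup>2))"
proof -
  define l where "l = log 2 (real p)"
  have l1: "l \<ge> 1" unfolding l_def using p3 by simp
  have d36: "real d \<ge> 36" using hd l1 unfolding l_def by linarith
  then have d36n: "d \<ge> 36" by simp
  have pl: "real p = 2 powr l" unfolding l_def using p3 by simp
  have "p < 2 ^ p" by (rule less_exp)
  then have "real p < 2 powr real p" by (simp add: powr_realpow)
  then have lp: "l < real p" unfolding l_def using p3 by (subst log_less_iff) auto
  have "2 * l * real d / (36 * (real p)\<^sup>2) \<le> 2 * real p * real d / (36 * (real p)\<^sup>2)"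
    using lp by (intro divide_right_mono mult_right_mono) auto
  also have "\<dots> = real d / (18 * real p)" using p3 by (simp add: power2_eq_square)
  also have "\<dots> \<le> real d / 54" using p3 by (intro divide_left_mono) auto
  finally have e1: "2 * l * real d / (36 * (real p)\<^sup>2) \<le> real d / 54" .
  have "(1::real) * 1 \<le> real p * real d" using p3 d36 by (intro mult_mono) auto
  then have "1 + 4 * real p * real d \<le> 5 * real p * real d" by (simp add: mult.commute)
  also have "\<dots> = real p * (5 * real d)" by simp
  also have "\<dots> \<le> 2 powr (real d / 36) * 2 powr (real d / 4)"
  proof (rule mult_mono)
    show "real p \<le> 2 powr (real d / 36)" unfolding pl using hd unfolding l_def by simp
    show "5 * real d \<le> 2 powr (real d / 4)" by (rule lin_bound[OF d36n])
  qed auto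
  also have "\<dots> = 2 powr (real d / 36 + real d / 4)" by (rule powr_add[symmetric])
  also have "\<dots> \<le> 2 powr (real d / 3 - 2 * l * real d / (36 * (real p)\<^sup>2))"
    using e1 by simp
  finally show ?thesis unfolding l_def .
qed

theorem lemma4p1:
  fixes p c d :: nat and L :: "nat \<Rightarrow> nat \<Rightarrow> int"
  assumes "prime p" and "odd p"
    and "c > 0" and "d > 0"
    and "36 * log 2 (real p) \<le> real d" and "real d \<le> 3 * log 2 (real c)"
    and "is_Fp_matrix p d c L"
    and "distinct_columns d c L"
  shows "measure_pmf.prob (pmf_of_set (binvecs d))
           {v. \<forall>j<c. transp_mult_mod p d L v j \<in> {0, 1}}
         \<le> 3 * 2 powr (- real d / (36 * (real p)\<^sup>2))"
proof -
  have p2: "p \<ge> 2" using assms(1) prime_ge_2_nat by blast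
  have p3: "p \<ge> 3" using p2 assms(2) by presburger
  define E where "E = {v \<in> binvecs d. \<forall>j<c. transp_mult_mod p d L v j \<in> {0,1}}"
  define l where "l = log 2 (real p)"
  have l0: "l > 0" unfolding l_def using p2 by simp
  have bne: "binvecs d \<noteq> {}" using card_binvecs[of d] by (metis card.empty power_not_zero zero_neq_numeral)
  have prob: "measure_pmf.prob (pmf_of_set (binvecs d)) {v. \<forall>j<c. transp_mult_mod p d L v j \<in> {0, 1}}
      = real (card E) / 2 ^ d"
  proof -
    have "binvecs d \<inter> {v. \<forall>j<c. transp_mult_mod p d L v j \<in> {0, 1}} = E" unfolding E_def by auto
    then show ?thesis using measure_pmf_of_set[OF bne finite_binvecs] by (simp add: card_binvecs)
  qed
  define R where "R = 2 powr (- real d / (36 * (real p)\<^sup>2))"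
  have R0: "R > 0" unfolding R_def by simp
  show ?thesis
  proof (cases "E = {}")
    case True
    then show ?thesis unfolding prob using R0 unfolding R_def by simp
  next
    case Ene: False
    define col where "col j = (\<lambda>i. if i < d then L i j else undefined)" for j
    have colU: "col j \<in> UU p d E" if j: "j < c" for j
    proof -
      have "col j \<in> VV p d" using assms(7) j unfolding VV_def is_Fp_matrix_def col_def
        by (auto simp: PiE_iff extensional_def)
      moreover have "\<forall>x\<in>E. (dot d (col j) x - 0) mod int p \<in> {0,1}"
      proof
        fix x assume "x \<in> E"
        then have "transp_mult_mod p d L x j \<in> {0,1}" using j unfolding E_def by auto
        moreover have "dot d (col j) x = (\<Sum>i<d. L i j * x i)" unfolding dot_def col_def by simp
        ultimately show "(dot d (col j) x - 0) mod int p \<in> {0,1}" unfolding transp_mult_mod_def by simp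
      qed
      ultimately show ?thesis unfolding UU_def by blast
    qed
    have inj: "inj_on col {..<c}"
    proof (rule inj_onI)
      fix j k assume j: "j \<in> {..<c}" and k: "k \<in> {..<c}" and e: "col j = col k"
      show "j = k"
      proof (rule ccontr)
        assume "j \<noteq> k"
        then obtain i where "i < d" "L i j \<noteq> L i k" using assms(8) j k unfolding distinct_columns_def by auto
        moreover have "col j i = col k i" using e by simp
        ultimately show False unfolding col_def by simp
      qed
    qed
    have cle: "c \<le> card (UU p d E)"
    proof -
      have "card {..<c} \<le> card (UU p d E)"
        by (rule card_inj_on_le[OF inj]) (use colU in \<open>auto intro: finite_subset[OF UU_sub]\<close>)
      then show ?thesis by simp
    qed
    have Esub: "E \<subseteq> binvecs d" unfolding E_def by auto
    have UB: "real (card (UU p d E)) * real (card E) powr (2 * l) \<le> (1 + 4 * real p * real d) * real p ^ (2 * d)"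
      using UU_bound[OF assms(2) p2 Esub Ene] unfolding l_def .
    define N where "N = real (card E)"
    have finE: "finite E" using Esub by (rule finite_subset) simp
    have Npos: "N > 0" unfolding N_def using Ene finE by (simp add: card_gt_0_iff)
    have cpos: "real c > 0" using assms(3) by simp
    have cbig: "2 powr (real d / 3) \<le> real c"
    proof -
      have "real d / 3 \<le> log 2 (real c)" using assms(6) by simp
      then have "2 powr (real d / 3) \<le> 2 powr (log 2 (real c))" by simp
      also have "\<dots> = real c" using cpos by simp
      finally show ?thesis .
    qed
    have cN: "real c * N powr (2 * l) \<le> (1 + 4 * real p * real d) * real p ^ (2 * d)"
    proof -
      have "real c * N powr (2 * l) \<le> real (card (UU p d E)) * N powr (2 * l)"
        using cle by (intro mult_right_mono) auto
      then show ?thesis using UB unfolding N_def by linarith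
    qed
    have D: "real (2 ^ d) powr (2 * l) = real p ^ (2 * d)"
    proof -
      have "real (2 ^ d) powr (2 * l) = real (2 ^ d) powr l * real (2 ^ d) powr l"
        by (simp add: powr_add[symmetric])
      also have "\<dots> = real p ^ d * real p ^ d" unfolding l_def using pow2_powr_log[OF p2] by simp
      also have "\<dots> = real p ^ (2 * d)" by (simp add: power_add mult_2)
      finally show ?thesis .
    qed
    define P where "P = N / 2 ^ d"
    have P0: "P \<ge> 0" unfolding P_def using Npos by simp
    have PP: "P powr (2 * l) = N powr (2 * l) / real p ^ (2 * d)"
    proof -
      have "P powr (2 * l) = N powr (2 * l) / real (2 ^ d) powr (2 * l)"
        unfolding P_def by (simp add: powr_divide)
      then show ?thesis using D by simp
    qed
    have ppos: "real p ^ (2 * d) > 0" using p2 by simp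
    have "P powr (2 * l) * real c \<le> 1 + 4 * real p * real d"
    proof -
      have "P powr (2 * l) * real c = (real c * N powr (2 * l)) / real p ^ (2 * d)" unfolding PP by simp
      also have "\<dots> \<le> ((1 + 4 * real p * real d) * real p ^ (2 * d)) / real p ^ (2 * d)"
        using cN ppos by (intro divide_right_mono) auto
      also have "\<dots> = 1 + 4 * real p * real d" using ppos by simp
      finally show ?thesis .
    qed
    also have "\<dots> \<le> 2 powr (real d / 3 - 2 * l * real d / (36 * (real p)\<^sup>2))"
      using num_bound[OF p3 assms(5)] unfolding l_def .
    also have "\<dots> = 2 powr (- (2 * l * real d / (36 * (real p)\<^sup>2))) * 2 powr (real d / 3)"
      by (simp add: powr_add[symmetric])
    also have "\<dots> \<le> 2 powr (- (2 * l * real d / (36 * (real p)\<^sup>2))) * real c"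
      using cbig by (intro mult_left_mono) auto
    finally have "P powr (2 * l) \<le> 2 powr (- (2 * l * real d / (36 * (real p)\<^sup>2)))"
      using cpos by simp
    also have "\<dots> = R powr (2 * l)" unfolding R_def powr_powr by (simp add: algebra_simps)
    finally have PR: "P powr (2 * l) \<le> R powr (2 * l)" .
    have "P \<le> R"
    proof (rule ccontr)
      assume "\<not> P \<le> R"
      then have "R powr (2 * l) < P powr (2 * l)" using R0 l0 by (intro powr_less_mono2) auto
      then show False using PR by simp
    qed
    then have "P \<le> 3 * R" using R0 by simp
    then show ?thesis unfolding prob R_def P_def N_def by simp
  qed
qed

end
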